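(* In the directed polymer model described in the context, the function $p:[0,1)\to\mathbb{R}$, $p(\beta)=\lim_{N\to\infty}\frac1N\log Z_N^{\beta,\omega}$, is continuous and non-increasing.
   Context: Let $S=(S_n)_{n\ge0}$ be the simple symmetric random walk on $\mathbb{Z}^d$ ($d\ge1$) started at $0$, with law $\mathbf{P}$ and expectation $\mathbf{E}$. Independently, let $\omega=\{\omega_{n,z}:n\in\mathbb{N},z\in\mathbb{Z}^d\}$ be an i.i.d. family (law $\mathbb{P}$, expectation $\mathbb{E}$) such that $\omega_{0,0}\ge -1$ a.s., $\mathbb{E}[\omega_{0,0}]=0$, and $\mathbb{P}[\omega_{0,0}>x]\sim C_{\mathbb{P}}x^{-\gamma}$ as $x\to\infty$ for some constant $C_{\mathbb{P}}>0$ and $\gamma\in(1,2)$. For $\beta\in[0,1)$ and $N\in\mathbb{N}$, $Z_N^{\beta,\omega}:=\mathbf{E}\big[\prod_{n=1}^N(1+\beta\omega_{n,S_n})\big]$; the limit $p(\beta)=\lim_{N\to\infty}\frac1N\log Z_N^{\beta,\omega}$ exists $\mathbb{P}$-a.s. and is deterministic. *)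

theory Defs
  imports "HOL-Probability.Probability" "HOL-Library.Landau_Symbols"
begin

definition srw_steps :: "(int ^ 'd) set" where
  "srw_steps = {v. \<exists>i. v = axis i 1 \<or> v = axis i (-1)}"

text \<open>Partition function: the expectation over the simple symmetric random walk
  started at 0 (uniform over the (2d)^N step sequences of length N),
  S_n = sum of the first n steps.\<close>
definition polymer_Z :: "nat \<Rightarrow> real \<Rightarrow> (nat \<Rightarrow> int ^ 'd \<Rightarrow> real) \<Rightarrow> real" where
  "polymer_Z N \<beta> w =
     (\<Sum>xs\<in>{xs. length xs = N \<and> set xs \<subseteq> (srw_steps :: (int ^ 'd) set)}.
        (\<Prod>n\<in>{1..N}. 1 + \<beta> * w n (sum_list (take n xs))))
     / (2 * real CARD('d)) ^ N"

end

theory Submission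
  imports Defs
begin
lemma ln_Y_integrable:
  fixes \<mu> :: "real measure" and g :: "real \<Rightarrow> real" and A B s t :: real
  assumes mu: "prob_space \<mu>" and ig: "integrable \<mu> g" and gl: "\<And>v. g v \<ge> -1"
    and A: "A \<ge> 0" and B: "B \<ge> 0" and AB: "A + B > 0" and t: "0 \<le> t" "t < 1"
  shows "integrable \<mu> (\<lambda>v. ln (A + B * (1 + t * g v)))"
    and "\<And>v. A + B * (1 - t) \<le> A + B * (1 + t * g v)" and "A + B * (1 - t) > 0"
proof -
  interpret prob_space \<mu> by fact
  show lb: "\<And>v. A + B * (1 - t) \<le> A + B * (1 + t * g v)"
  proof -
    fix v have "t * g v \<ge> t * (-1)" using gl[of v] t by (intro mult_left_mono) auto
    then show "A + B * (1 - t) \<le> A + B * (1 + t * g v)" using B by (intro add_left_mono mult_left_mono) auto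
  qed
  show mpos: "A + B * (1 - t) > 0"
  proof (cases "B = 0")
    case True then show ?thesis using AB by simp
  next
    case False then have "B * (1 - t) > 0" using B t by simp
    then show ?thesis using A by simp
  qed
  define m where "m = A + B * (1 - t)"
  have iY: "integrable \<mu> (\<lambda>v. A + B * (1 + t * g v))" using ig by simp
  show "integrable \<mu> (\<lambda>v. ln (A + B * (1 + t * g v)))"
  proof (rule Bochner_Integration.integrable_bound[OF Bochner_Integration.integrable_add[OF integrable_const[of "\<bar>ln m\<bar>"] integrable_abs[OF iY]]])
    show "(\<lambda>v. ln (A + B * (1 + t * g v))) \<in> borel_measurable \<mu>" using ig by measurable
    show "AE x in \<mu>. norm (ln (A + B * (1 + t * g x))) \<le> norm (\<bar>ln m\<bar> + \<bar>A + B * (1 + t * g x)\<bar>)"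
    proof (intro AE_I2)
      fix x
      have p: "A + B * (1 + t * g x) > 0" using lb[of x] mpos by linarith
      have "ln m \<le> ln (A + B * (1 + t * g x))" using lb[of x] mpos m_def by simp
      moreover have "ln (A + B * (1 + t * g x)) \<le> A + B * (1 + t * g x) - 1" using p ln_le_minus_one by blast
      ultimately show "norm (ln (A + B * (1 + t * g x))) \<le> norm (\<bar>ln m\<bar> + \<bar>A + B * (1 + t * g x)\<bar>)"
        by auto
    qed
  qed
qed

lemma one_site_mono:
  fixes \<mu> :: "real measure" and g :: "real \<Rightarrow> real" and A B s t :: real
  assumes mu: "prob_space \<mu>" and ig: "integrable \<mu> g" and g0: "(\<integral>v. g v \<partial>\<mu>) = 0" and gl: "\<And>v. g v \<ge> -1"
    and A: "A \<ge> 0" and B: "B \<ge> 0" and AB: "A + B > 0" and s: "0 \<le> s" "s \<le> t" "t < 1"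
  shows "(\<integral>v. ln (A + B * (1 + t * g v)) \<partial>\<mu>) \<le> (\<integral>v. ln (A + B * (1 + s * g v)) \<partial>\<mu>)"
proof (cases "t = 0")
  case True then have "s = 0" using s by linarith
  then show ?thesis using True by simp
next
  case False
  interpret prob_space \<mu> by fact
  define Y where "Y v = A + B * (1 + t * g v)" for v
  define c where "c = A + B"
  have iY: "integrable \<mu> Y" unfolding Y_def using ig by simp
  have iL: "integrable \<mu> (\<lambda>v. ln (Y v))" unfolding Y_def using ln_Y_integrable[OF mu ig gl A B AB] s by auto
  have iLs: "integrable \<mu> (\<lambda>v. ln (A + B * (1 + s * g v)))" using ln_Y_integrable[OF mu ig gl A B AB] s by auto
  have t0: "0 \<le> t" using s by linarith
  have Ypos: "Y v > 0" for v
  proof -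
    have "A + B*(1-t) \<le> Y v" "0 < A + B*(1-t)" using ln_Y_integrable(2,3)[OF mu ig gl A B AB t0 s(3)] unfolding Y_def by auto
    then show ?thesis by linarith
  qed
  have cpos: "c > 0" using AB c_def by simp
  have EY: "(\<integral>v. Y v \<partial>\<mu>) = c" unfolding Y_def c_def using ig g0
    by (simp add: algebra_simps prob_space)
  have "(\<integral>v. ln (Y v) \<partial>\<mu>) \<le> (\<integral>v. ln c + Y v / c - 1 \<partial>\<mu>)"
  proof (rule integral_mono[OF iL])
    show "integrable \<mu> (\<lambda>v. ln c + Y v / c - 1)" using iY by simp
    fix v
    have "ln (Y v / c) \<le> Y v / c - 1" using Ypos[of v] cpos by (intro ln_le_minus_one) simp
    then show "ln (Y v) \<le> ln c + Y v / c - 1" using Ypos[of v] cpos by (simp add: ln_div)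
  qed
  also have "\<dots> = ln c" using iY EY cpos by (simp add: prob_space)
  finally have ElnY: "(\<integral>v. ln (Y v) \<partial>\<mu>) \<le> ln c" .
  define \<tau> where "\<tau> = s / t"
  have tpos: "t > 0" using False s by simp
  have tau: "0 \<le> \<tau>" "\<tau> \<le> 1" unfolding \<tau>_def using s tpos by auto
  have eq: "A + B * (1 + s * g v) = (1 - \<tau>) * c + \<tau> * Y v" for v
    unfolding \<tau>_def c_def Y_def using tpos by (simp add: field_simps)
  have "(\<integral>v. (1 - \<tau>) * ln c + \<tau> * ln (Y v) \<partial>\<mu>) \<le> (\<integral>v. ln (A + B * (1 + s * g v)) \<partial>\<mu>)"
  proof (rule integral_mono[OF _ iLs])
    show "integrable \<mu> (\<lambda>v. (1 - \<tau>) * ln c + \<tau> * ln (Y v))" using iL by simp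
    fix v
    have "(1 - \<tau>) * ln c + \<tau> * ln (Y v) \<le> ln ((1 - \<tau>) *\<^sub>R c + \<tau> *\<^sub>R Y v)"
      using concave_onD[OF ln_concave, of \<tau> c "Y v"] tau cpos Ypos[of v] by simp
    then show "(1 - \<tau>) * ln c + \<tau> * ln (Y v) \<le> ln (A + B * (1 + s * g v))" by (simp add: eq)
  qed
  moreover have "(\<integral>v. (1 - \<tau>) * ln c + \<tau> * ln (Y v) \<partial>\<mu>) = (1 - \<tau>) * ln c + \<tau> * (\<integral>v. ln (Y v) \<partial>\<mu>)"
    using iL by (simp add: prob_space)
  moreover have "(\<integral>v. ln (Y v) \<partial>\<mu>) \<le> (1 - \<tau>) * ln c + \<tau> * (\<integral>v. ln (Y v) \<partial>\<mu>)"
  proof -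
    have "(1 - \<tau>) * (\<integral>v. ln (Y v) \<partial>\<mu>) \<le> (1 - \<tau>) * ln c" using ElnY tau by (intro mult_left_mono) auto
    then show ?thesis by (simp add: algebra_simps)
  qed
  ultimately show ?thesis unfolding Y_def by linarith
qed

definition Zs :: "'k set \<Rightarrow> ('k \<Rightarrow> 'i set) \<Rightarrow> ('k \<Rightarrow> real) \<Rightarrow> ('i \<Rightarrow> real) \<Rightarrow> ('i \<Rightarrow> real) \<Rightarrow> real" where
  "Zs K P c s y = (\<Sum>k\<in>K. c k * (\<Prod>i\<in>P k. 1 + s i * max (y i) (-1)))"

lemma Zs_measurable:
  assumes "\<And>i. i \<in> I \<Longrightarrow> (\<lambda>y. y i) \<in> borel_measurable N" "\<And>k. k \<in> K \<Longrightarrow> P k \<subseteq> I"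
  shows "Zs K P c s \<in> borel_measurable N"
  unfolding Zs_def
proof (intro borel_measurable_sum borel_measurable_times borel_measurable_const borel_measurable_prod
    borel_measurable_add borel_measurable_max)
  fix k i assume "k \<in> K" "i \<in> P k"
  then show "(\<lambda>y. y i) \<in> borel_measurable N" using assms by auto
qed

lemma factor_ge:
  fixes s v :: real assumes "0 \<le> s" shows "1 - s \<le> 1 + s * max v (-1)"
proof -
  have "s * (-1) \<le> s * max v (-1)" using assms by (intro mult_left_mono) auto
  then show ?thesis by simp
qed

lemma Zs_ge:
  fixes s :: "'i \<Rightarrow> real" and c :: "'k \<Rightarrow> real"
  assumes s: "\<And>i. 0 \<le> s i" "\<And>i. s i < 1" and c: "\<And>k. k \<in> K \<Longrightarrow> c k > 0"
  shows "(\<Sum>k\<in>K. c k * (\<Prod>i\<in>P k. 1 - s i)) \<le> Zs K P c s y"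
  unfolding Zs_def
proof (rule sum_mono)
  fix k assume k: "k \<in> K"
  have "(\<Prod>i\<in>P k. 1 - s i) \<le> (\<Prod>i\<in>P k. 1 + s i * max (y i) (- 1))"
  proof (rule prod_mono)
    fix i show "0 \<le> 1 - s i \<and> 1 - s i \<le> 1 + s i * max (y i) (- 1)"
      using s(2)[of i] factor_ge[OF s(1)[of i]] by simp
  qed
  then show "c k * (\<Prod>i\<in>P k. 1 - s i) \<le> c k * (\<Prod>i\<in>P k. 1 + s i * max (y i) (- 1))"
    using c[OF k] by (intro mult_left_mono) auto
qed

lemma Zs_lb_pos:
  fixes s :: "'i \<Rightarrow> real" and c :: "'k \<Rightarrow> real"
  assumes s: "\<And>i. 0 \<le> s i" "\<And>i. s i < 1" and c: "\<And>k. k \<in> K \<Longrightarrow> c k > 0"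
    and K: "finite K" "K \<noteq> {}"
  shows "(\<Sum>k\<in>K. c k * (\<Prod>i\<in>P k. 1 - s i)) > 0"
proof (rule ordered_comm_monoid_add_class.sum_pos)
  show "finite K" "K \<noteq> {}" using K by auto
  fix k assume "k \<in> K"
  have "(\<Prod>i\<in>P k. 1 - s i) > 0" using s(2) by (intro prod_pos) (simp add: algebra_simps)
  then show "c k * (\<Prod>i\<in>P k. 1 - s i) > 0" using c \<open>k \<in> K\<close> by simp
qed

lemma Zs_pos:
  fixes s :: "'i \<Rightarrow> real" and c :: "'k \<Rightarrow> real"
  assumes s: "\<And>i. 0 \<le> s i" "\<And>i. s i < 1" and c: "\<And>k. k \<in> K \<Longrightarrow> c k > 0"
    and K: "finite K" "K \<noteq> {}"
  shows "Zs K P c s y > 0"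
proof -
  have "(\<Sum>k\<in>K. c k * (\<Prod>i\<in>P k. 1 - s i)) \<le> Zs K P c s y" using s c by (rule Zs_ge)
  moreover have "(\<Sum>k\<in>K. c k * (\<Prod>i\<in>P k. 1 - s i)) > 0" using s c K by (rule Zs_lb_pos)
  ultimately show ?thesis by linarith
qed

lemma Zs_cong_s:
  assumes "\<And>k i. k \<in> K \<Longrightarrow> i \<in> P k \<Longrightarrow> s i = s' i"
  shows "Zs K P c s y = Zs K P c s' y"
  unfolding Zs_def using assms by (intro sum.cong refl arg_cong2[where f="(*)"] prod.cong) auto

lemma Zs_decomp:
  assumes K: "finite K" and P: "\<And>k. k \<in> K \<Longrightarrow> finite (P k)"
  shows "Zs K P c s (y(j:=v)) =
    (\<Sum>k\<in>{k\<in>K. j \<notin> P k}. c k * (\<Prod>i\<in>P k. 1 + s i * max (y i) (-1))) +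
    (\<Sum>k\<in>{k\<in>K. j \<in> P k}. c k * (\<Prod>i\<in>P k - {j}. 1 + s i * max (y i) (-1))) * (1 + s j * max v (-1))"
proof -
  have "Zs K P c s (y(j:=v)) = (\<Sum>k\<in>K \<inter> {k. j \<notin> P k}. c k * (\<Prod>i\<in>P k. 1 + s i * max ((y(j:=v)) i) (-1)))
     + (\<Sum>k\<in>K - {k. j \<notin> P k}. c k * (\<Prod>i\<in>P k. 1 + s i * max ((y(j:=v)) i) (-1)))"
    unfolding Zs_def using K by (rule sum.Int_Diff)
  also have "(\<Sum>k\<in>K \<inter> {k. j \<notin> P k}. c k * (\<Prod>i\<in>P k. 1 + s i * max ((y(j:=v)) i) (-1)))
     = (\<Sum>k\<in>{k\<in>K. j \<notin> P k}. c k * (\<Prod>i\<in>P k. 1 + s i * max (y i) (-1)))"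
    by (intro sum.cong) (auto intro!: prod.cong arg_cong2[where f="(*)"])
  also have "(\<Sum>k\<in>K - {k. j \<notin> P k}. c k * (\<Prod>i\<in>P k. 1 + s i * max ((y(j:=v)) i) (-1)))
     = (\<Sum>k\<in>{k\<in>K. j \<in> P k}. c k * (\<Prod>i\<in>P k - {j}. 1 + s i * max (y i) (-1)) * (1 + s j * max v (-1)))"
  proof (intro sum.cong)
    show "K - {k. j \<notin> P k} = {k \<in> K. j \<in> P k}" by auto
    fix k assume k: "k \<in> {k \<in> K. j \<in> P k}"
    have "(\<Prod>i\<in>P k. 1 + s i * max ((y(j:=v)) i) (-1)) =
      (1 + s j * max ((y(j:=v)) j) (-1)) * (\<Prod>i\<in>P k - {j}. 1 + s i * max ((y(j:=v)) i) (-1))"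
      using k P by (intro prod.remove) auto
    also have "(\<Prod>i\<in>P k - {j}. 1 + s i * max ((y(j:=v)) i) (-1)) = (\<Prod>i\<in>P k - {j}. 1 + s i * max (y i) (-1))"
      by (intro prod.cong) auto
    finally show "c k * (\<Prod>i\<in>P k. 1 + s i * max ((y(j:=v)) i) (-1)) =
       c k * (\<Prod>i\<in>P k - {j}. 1 + s i * max (y i) (-1)) * (1 + s j * max v (-1))" by simp
  qed
  also have "\<dots> = (\<Sum>k\<in>{k\<in>K. j \<in> P k}. c k * (\<Prod>i\<in>P k - {j}. 1 + s i * max (y i) (-1))) * (1 + s j * max v (-1))"
    by (simp add: sum_distrib_right)
  finally show ?thesis .
qed

locale pz =
  fixes \<mu> :: "real measure" and I :: "'i set" and K :: "'k set" and P :: "'k \<Rightarrow> 'i set" and c :: "'k \<Rightarrow> real"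
  assumes mu: "prob_space \<mu>" and sets_mu: "sets \<mu> = sets borel"
    and int_g: "integrable \<mu> (\<lambda>v. max v (-1))" and mean_g: "(\<integral>v. max v (-1) \<partial>\<mu>) = 0"
    and finI: "finite I" and finK: "finite K" and Kne: "K \<noteq> {}" and Psub: "\<And>k. k \<in> K \<Longrightarrow> P k \<subseteq> I"
    and cpos: "\<And>k. k \<in> K \<Longrightarrow> c k > 0"
begin

abbreviation "PM \<equiv> PiM I (\<lambda>_. \<mu>)"

lemma PM_prob: "prob_space PM"
  using mu by (intro prob_space_PiM) auto

lemma PS: "product_sigma_finite (\<lambda>_. \<mu>)"
  unfolding product_sigma_finite_def using prob_space_imp_sigma_finite[OF mu] by auto

lemma comp_meas: "i \<in> I \<Longrightarrow> (\<lambda>y. y i) \<in> borel_measurable PM"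
  using measurable_component_singleton[of i I "\<lambda>_. \<mu>"] by (simp add: measurable_cong_sets[OF refl sets_mu])

lemma Zs_meas: "Zs K P c s \<in> borel_measurable PM"
  by (rule Zs_measurable[OF comp_meas Psub])

lemma finP: "k \<in> K \<Longrightarrow> finite (P k)"
  using Psub finI finite_subset by blast

lemma Zs_int:
  fixes s :: "'i \<Rightarrow> real"
  shows "integrable PM (Zs K P c s)" and "(\<integral>y. Zs K P c s y \<partial>PM) = sum c K"
proof -
  interpret product_sigma_finite "\<lambda>_. \<mu>" by (rule PS)
  interpret prob_space \<mu> by (rule mu)
  define h where "h k i v = (if i \<in> P k then 1 + s i * max v (-1) else 1)" for k i v
  have hint: "integrable \<mu> (h k i)" for k i
    unfolding h_def using int_g by (cases "i \<in> P k") auto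
  have hI: "integral\<^sup>L \<mu> (h k i) = 1" for k i
    unfolding h_def using int_g mean_g by (cases "i \<in> P k") (auto simp: prob_space)
  have eq: "(\<Prod>i\<in>P k. 1 + s i * max (y i) (-1)) = (\<Prod>i\<in>I. h k i (y i))" if k: "k \<in> K" for k y
  proof -
    have "(\<Prod>i\<in>I. h k i (y i)) = (\<Prod>i\<in>I \<inter> P k. 1 + s i * max (y i) (-1))"
      unfolding h_def using prod.inter_restrict[OF finI, of "\<lambda>i. 1 + s i * max (y i) (-1)" "P k"] by simp
    also have "I \<inter> P k = P k" using Psub[OF k] by auto
    finally show ?thesis by simp
  qed
  have Zeq: "Zs K P c s y = (\<Sum>k\<in>K. c k * (\<Prod>i\<in>I. h k i (y i)))" for y
    unfolding Zs_def by (intro sum.cong refl) (simp add: eq)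
  have pi: "integrable PM (\<lambda>y. \<Prod>i\<in>I. h k i (y i))" for k
    by (rule product_integrable_prod[OF finI hint])
  have pI: "(\<integral>y. (\<Prod>i\<in>I. h k i (y i)) \<partial>PM) = 1" for k
    by (subst product_integral_prod[OF finI hint]) (simp add: hI)
  show "integrable PM (Zs K P c s)"
    unfolding Zeq[abs_def] using pi by (intro Bochner_Integration.integrable_sum integrable_mult_right) auto
  show "(\<integral>y. Zs K P c s y \<partial>PM) = sum c K"
    unfolding Zeq using pi by (subst Bochner_Integration.integral_sum) (auto simp: pI)
qed

lemma lnZs_int:
  fixes s :: "'i \<Rightarrow> real"
  assumes s: "\<And>i. 0 \<le> s i" "\<And>i. s i < 1"
  shows "integrable PM (\<lambda>y. ln (Zs K P c s y))"
proof -
  interpret P: prob_space PM by (rule PM_prob)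
  define m where "m = (\<Sum>k\<in>K. c k * (\<Prod>i\<in>P k. 1 - s i))"
  have mpos: "m > 0" unfolding m_def using s cpos finK Kne by (rule Zs_lb_pos)
  have mle: "m \<le> Zs K P c s y" for y unfolding m_def using s cpos by (rule Zs_ge)
  show ?thesis
  proof (rule Bochner_Integration.integrable_bound[OF Bochner_Integration.integrable_add[OF P.integrable_const[of "\<bar>ln m\<bar>"] integrable_abs[OF Zs_int(1)]]])
    show "(\<lambda>y. ln (Zs K P c s y)) \<in> borel_measurable PM" using Zs_meas by measurable
    show "AE x in PM. norm (ln (Zs K P c s x)) \<le> norm (\<bar>ln m\<bar> + \<bar>Zs K P c s x\<bar>)"
    proof (intro AE_I2)
      fix x
      have p: "Zs K P c s x > 0" using mle[of x] mpos by linarith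
      have "ln m \<le> ln (Zs K P c s x)" using mle[of x] mpos by simp
      moreover have "ln (Zs K P c s x) \<le> Zs K P c s x - 1" using p ln_le_minus_one by blast
      ultimately show "norm (ln (Zs K P c s x)) \<le> norm (\<bar>ln m\<bar> + \<bar>Zs K P c s x\<bar>)" by auto
    qed
  qed
qed

end

context pz begin

lemma step:
  fixes s :: "'i \<Rightarrow> real"
  assumes j: "j \<in> I" and s: "\<And>i. 0 \<le> s i" "\<And>i. s i < 1" and t: "s j \<le> t" "t < 1"
  shows "(\<integral>y. ln (Zs K P c (s(j:=t)) y) \<partial>PM) \<le> (\<integral>y. ln (Zs K P c s y) \<partial>PM)"
proof -
  interpret product_sigma_finite "\<lambda>_. \<mu>" by (rule PS)
  define s' where "s' = s(j:=t)"
  have s': "\<And>i. 0 \<le> s' i" "\<And>i. s' i < 1" unfolding s'_def using s t by (auto simp: order_trans[OF s(1)])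
  define A where "A y = (\<Sum>k\<in>{k\<in>K. j \<notin> P k}. c k * (\<Prod>i\<in>P k. 1 + s i * max (y i) (-1)))" for y :: "'i \<Rightarrow> real"
  define B where "B y = (\<Sum>k\<in>{k\<in>K. j \<in> P k}. c k * (\<Prod>i\<in>P k - {j}. 1 + s i * max (y i) (-1)))" for y :: "'i \<Rightarrow> real"
  have dec: "Zs K P c s (y(j:=v)) = A y + B y * (1 + s j * max v (-1))" for y v
    unfolding A_def B_def by (rule Zs_decomp[OF finK finP])
  have dec': "Zs K P c s' (y(j:=v)) = A y + B y * (1 + t * max v (-1))" for y v
  proof -
    have "Zs K P c s' (y(j:=v)) =
    (\<Sum>k\<in>{k\<in>K. j \<notin> P k}. c k * (\<Prod>i\<in>P k. 1 + s' i * max (y i) (-1))) +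
    (\<Sum>k\<in>{k\<in>K. j \<in> P k}. c k * (\<Prod>i\<in>P k - {j}. 1 + s' i * max (y i) (-1))) * (1 + s' j * max v (-1))"
      by (rule Zs_decomp[OF finK finP])
    also have "(\<Sum>k\<in>{k\<in>K. j \<notin> P k}. c k * (\<Prod>i\<in>P k. 1 + s' i * max (y i) (-1))) = A y"
      unfolding A_def s'_def by (intro sum.cong refl arg_cong2[where f="(*)"] prod.cong) auto
    also have "(\<Sum>k\<in>{k\<in>K. j \<in> P k}. c k * (\<Prod>i\<in>P k - {j}. 1 + s' i * max (y i) (-1))) = B y"
      unfolding B_def s'_def by (intro sum.cong refl arg_cong2[where f="(*)"] prod.cong) auto
    also have "s' j = t" by (simp add: s'_def)
    finally show ?thesis .
  qed
  have fac0: "0 \<le> 1 + s i * max v (-1)" for i v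
    using factor_ge[OF s(1)[of i], of v] s(2)[of i] by linarith
  have A0: "A y \<ge> 0" for y unfolding A_def
    using cpos by (intro sum_nonneg mult_nonneg_nonneg prod_nonneg fac0) (auto simp: less_imp_le)
  have B0: "B y \<ge> 0" for y unfolding B_def
    using cpos by (intro sum_nonneg mult_nonneg_nonneg prod_nonneg fac0) (auto simp: less_imp_le)
  have AB: "A y + B y > 0" for y
  proof -
    have "Zs K P c s (y(j:=0)) > 0" using s cpos finK Kne by (rule Zs_pos)
    then show ?thesis using dec[of y 0] by simp
  qed
  define G where "G v = max v (-1::real)" for v
  have Gl: "\<And>v. G v \<ge> -1" unfolding G_def by simp
  have iG: "integrable \<mu> G" unfolding G_def by (rule int_g)
  have mG: "(\<integral>v. G v \<partial>\<mu>) = 0" unfolding G_def by (rule mean_g)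
  define D where "D y = ln (Zs K P c s y) - ln (Zs K P c s' y)" for y
  have iD: "integrable PM D" unfolding D_def using lnZs_int[OF s] lnZs_int[OF s'] by auto
  have Ieq: "insert j (I - {j}) = I" using j by auto
  have "(\<integral>y. D y \<partial>PM) = (\<integral>x. (\<integral>v. D (x(j:=v)) \<partial>\<mu>) \<partial>PiM (I - {j}) (\<lambda>_. \<mu>))"
    using product_integral_insert[of "I - {j}" j D] iD finI Ieq by simp
  also have "\<dots> \<ge> 0"
  proof (rule Bochner_Integration.integral_nonneg)
    fix x :: "'i \<Rightarrow> real"
    have i1: "integrable \<mu> (\<lambda>v. ln (A x + B x * (1 + s j * G v)))"
      using ln_Y_integrable(1)[OF mu iG Gl A0 B0 AB s(1) s(2)] .
    have i2: "integrable \<mu> (\<lambda>v. ln (A x + B x * (1 + t * G v)))"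
      using ln_Y_integrable(1)[OF mu iG Gl A0 B0 AB order_trans[OF s(1) t(1)] t(2)] .
    have "(\<integral>v. D (x(j:=v)) \<partial>\<mu>) = (\<integral>v. ln (A x + B x * (1 + s j * G v)) - ln (A x + B x * (1 + t * G v)) \<partial>\<mu>)"
      unfolding D_def dec dec' G_def by simp
    also have "\<dots> = (\<integral>v. ln (A x + B x * (1 + s j * G v)) \<partial>\<mu>) - (\<integral>v. ln (A x + B x * (1 + t * G v)) \<partial>\<mu>)"
      using i1 i2 by (rule Bochner_Integration.integral_diff)
    also have "\<dots> \<ge> 0"
      using one_site_mono[OF mu iG mG Gl A0 B0 AB s(1) t] by simp
    finally show "0 \<le> (\<integral>v. D (x(j:=v)) \<partial>\<mu>)" .
  qed
  finally have "0 \<le> (\<integral>y. D y \<partial>PM)" .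
  also have "(\<integral>y. D y \<partial>PM) = (\<integral>y. ln (Zs K P c s y) \<partial>PM) - (\<integral>y. ln (Zs K P c s' y) \<partial>PM)"
    unfolding D_def using lnZs_int[OF s] lnZs_int[OF s'] by (rule Bochner_Integration.integral_diff)
  finally show ?thesis unfolding s'_def by simp
qed

lemma mono_all:
  fixes \<beta> \<beta>' :: real
  assumes b: "0 \<le> \<beta>" "\<beta> \<le> \<beta>'" "\<beta>' < 1"
  shows "(\<integral>y. ln (Zs K P c (\<lambda>_. \<beta>') y) \<partial>PM) \<le> (\<integral>y. ln (Zs K P c (\<lambda>_. \<beta>) y) \<partial>PM)"
proof -
  have main: "(\<integral>y. ln (Zs K P c (\<lambda>i. if i \<in> J then \<beta>' else \<beta>) y) \<partial>PM) \<le> (\<integral>y. ln (Zs K P c (\<lambda>_. \<beta>) y) \<partial>PM)"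
    if "finite J" "J \<subseteq> I" for J
    using that
  proof (induction J rule: finite_induct)
    case empty then show ?case by simp
  next
    case (insert a F)
    define s where "s = (\<lambda>i. if i \<in> F then \<beta>' else \<beta>)"
    have s: "\<And>i. 0 \<le> s i" "\<And>i. s i < 1" unfolding s_def using b by auto
    have sa: "s a \<le> \<beta>'" unfolding s_def using b insert by auto
    have eq: "(\<lambda>i. if i \<in> insert a F then \<beta>' else \<beta>) = s(a := \<beta>')" unfolding s_def by auto
    have "(\<integral>y. ln (Zs K P c (s(a := \<beta>')) y) \<partial>PM) \<le> (\<integral>y. ln (Zs K P c s y) \<partial>PM)"
      using insert.prems s sa b by (intro step) auto
    also have "\<dots> \<le> (\<integral>y. ln (Zs K P c (\<lambda>_. \<beta>) y) \<partial>PM)"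
      using insert unfolding s_def by auto
    finally show ?case unfolding eq .
  qed
  have "(\<integral>y. ln (Zs K P c (\<lambda>_. \<beta>') y) \<partial>PM) = (\<integral>y. ln (Zs K P c (\<lambda>i. if i \<in> I then \<beta>' else \<beta>) y) \<partial>PM)"
    using Psub by (intro Bochner_Integration.integral_cong refl arg_cong[where f=ln] Zs_cong_s) auto
  also have "\<dots> \<le> (\<integral>y. ln (Zs K P c (\<lambda>_. \<beta>) y) \<partial>PM)" using main[OF finI] by simp
  finally show ?thesis .
qed

end

definition paths :: "nat \<Rightarrow> (int ^ 'd) list set" where
  "paths N = {xs. length xs = N \<and> set xs \<subseteq> srw_steps}"

definition sites :: "nat \<Rightarrow> (int ^ 'd) list \<Rightarrow> (nat \<times> (int ^ 'd)) set" where
  "sites N xs = (\<lambda>n. (n, sum_list (take n xs))) ` {1..N}"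

definition Iset :: "nat \<Rightarrow> (nat \<times> (int ^ 'd)) set" where
  "Iset N = \<Union> (sites N ` paths N)"

lemma srw_steps_eq: "srw_steps = range (\<lambda>i. axis i 1) \<union> range (\<lambda>i. axis i (-1))"
  unfolding srw_steps_def by auto

lemma finite_srw: "finite (srw_steps :: (int ^ 'd) set)"
  unfolding srw_steps_eq by simp

lemma card_srw: "card (srw_steps :: (int ^ 'd) set) \<le> 2 * CARD('d)"
proof -
  have "card (srw_steps :: (int ^ 'd) set) \<le> card (range (\<lambda>i::'d. axis i (1::int))) + card (range (\<lambda>i::'d. axis i (-1::int)))"
    unfolding srw_steps_eq by (rule card_Un_le)
  also have "\<dots> \<le> CARD('d) + CARD('d)" by (intro add_mono card_image_le) auto
  finally show ?thesis by simp
qed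

lemma paths_alt: "paths N = {xs. set xs \<subseteq> srw_steps \<and> length xs = N}"
  unfolding paths_def by auto

lemma finite_paths: "finite (paths N :: (int ^ 'd) list set)"
  unfolding paths_alt by (rule finite_lists_length_eq[OF finite_srw])

lemma card_paths: "real (card (paths N :: (int ^ 'd) list set)) \<le> (2 * real CARD('d)) ^ N"
proof -
  have "card (paths N :: (int ^ 'd) list set) = card (srw_steps :: (int ^ 'd) set) ^ N"
    unfolding paths_alt by (rule card_lists_length_eq[OF finite_srw])
  also have "\<dots> \<le> (2 * CARD('d)) ^ N" by (intro power_mono card_srw) auto
  finally have "real (card (paths N :: (int ^ 'd) list set)) \<le> real ((2 * CARD('d)) ^ N)" by linarith
  then show ?thesis by simp
qed

lemma paths_ne: "paths N \<noteq> ({} :: (int ^ 'd) list set)"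
proof -
  have "replicate N (axis undefined 1) \<in> (paths N :: (int ^ 'd) list set)"
    unfolding paths_def srw_steps_def by auto
  then show ?thesis by auto
qed

lemma finite_sites: "finite (sites N xs)" unfolding sites_def by simp

lemma finite_Iset: "finite (Iset N :: (nat \<times> (int ^ 'd)) set)"
  unfolding Iset_def using finite_paths finite_sites by blast

lemma Iset_ne: "N \<ge> 1 \<Longrightarrow> Iset N \<noteq> ({} :: (nat \<times> (int ^ 'd)) set)"
  unfolding Iset_def sites_def using paths_ne[where N=N] by auto

lemma sites_sub: "xs \<in> paths N \<Longrightarrow> sites N xs \<subseteq> Iset N"
  unfolding Iset_def by auto

lemma d2_pos: "(2 * real CARD('d::finite)) > 0" by (simp add: card_gt_0_iff)

lemma polymer_Z_alt: "polymer_Z N \<beta> w =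
  (\<Sum>xs\<in>(paths N :: (int ^ 'd) list set). \<Prod>n\<in>{1..N}. 1 + \<beta> * w n (sum_list (take n xs))) / (2 * real CARD('d)) ^ N"
  unfolding polymer_Z_def paths_def by simp

lemma polymer_Z_Zs:
  fixes w :: "nat \<Rightarrow> int ^ 'd \<Rightarrow> real"
  assumes w: "\<And>n z. w n z \<ge> -1"
  shows "polymer_Z N \<beta> w = Zs (paths N) (sites N) (\<lambda>_. 1 / (2 * real CARD('d)) ^ N) (\<lambda>_. \<beta>)
     (\<lambda>i\<in>Iset N. w (fst i) (snd i))"
proof -
  have "Zs (paths N) (sites N) (\<lambda>_. 1 / (2 * real CARD('d)) ^ N) (\<lambda>_. \<beta>) (\<lambda>i\<in>Iset N. w (fst i) (snd i))
    = (\<Sum>xs\<in>(paths N :: (int ^ 'd) list set). (\<Prod>n\<in>{1..N}. 1 + \<beta> * w n (sum_list (take n xs))) / (2 * real CARD('d)) ^ N)"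
    unfolding Zs_def
  proof (intro sum.cong refl)
    fix xs :: "(int ^ 'd) list" assume xs: "xs \<in> paths N"
    have inj: "inj_on (\<lambda>n. (n, sum_list (take n xs))) {1..N}" by (auto intro: inj_onI)
    have "(\<Prod>i\<in>sites N xs. 1 + \<beta> * max ((\<lambda>i\<in>Iset N. w (fst i) (snd i)) i) (- 1))
       = (\<Prod>i\<in>sites N xs. 1 + \<beta> * w (fst i) (snd i))"
      using sites_sub[OF xs] by (intro prod.cong refl) (auto simp: max_absorb1[OF w])
    also have "\<dots> = (\<Prod>n\<in>{1..N}. 1 + \<beta> * w n (sum_list (take n xs)))"
      unfolding sites_def by (subst prod.reindex[OF inj]) simp
    finally show "1 / (2 * real CARD('d)) ^ N * (\<Prod>i\<in>sites N xs. 1 + \<beta> * max ((\<lambda>i\<in>Iset N. w (fst i) (snd i)) i) (- 1))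
      = (\<Prod>n\<in>{1..N}. 1 + \<beta> * w n (sum_list (take n xs))) / (2 * real CARD('d)) ^ N" by simp
  qed
  then show ?thesis unfolding polymer_Z_alt by (simp add: sum_divide_distrib)
qed

lemma polymer_ratio:
  fixes w :: "nat \<Rightarrow> int ^ 'd \<Rightarrow> real"
  assumes w: "\<And>n z. w n z \<ge> -1" and b: "0 \<le> b1" "b1 \<le> b2" "b2 < 1"
  shows "((1 - b2) / (1 - b1)) ^ N * polymer_Z N b1 w \<le> polymer_Z N b2 w"
proof -
  define r where "r = (1 - b2) / (1 - b1)"
  have r0: "r \<ge> 0" unfolding r_def using b by simp
  have fac: "r * (1 + b1 * v) \<le> 1 + b2 * v" "0 \<le> 1 + b1 * v" if v: "v \<ge> -1" for v
  proof -
    have "b1 * (-1) \<le> b1 * v" using v b by (intro mult_left_mono) auto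
    then show "0 \<le> 1 + b1 * v" using b by linarith
    show "r * (1 + b1 * v) \<le> 1 + b2 * v"
    proof (cases "v \<ge> 0")
      case True
      have "r \<le> 1" unfolding r_def using b by (simp add: divide_le_eq_1)
      then have "r * (1 + b1 * v) \<le> 1 + b1 * v" using \<open>0 \<le> 1 + b1 * v\<close> r0 by (simp add: mult_left_le_one_le)
      also have "\<dots> \<le> 1 + b2 * v" using True b by (simp add: mult_right_mono)
      finally show ?thesis .
    next
      case False
      have "(1 + b2 * v) * (1 - b1) - (1 - b2) * (1 + b1 * v) = (b2 - b1) * (1 + v)" by (simp add: algebra_simps)
      also have "\<dots> \<ge> 0" using b v by simp
      finally have "(1 - b2) * (1 + b1 * v) \<le> (1 + b2 * v) * (1 - b1)" by simp
      then show ?thesis unfolding r_def using b by (simp add: field_simps)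
    qed
  qed
  have "r ^ N * (\<Sum>xs\<in>(paths N :: (int ^ 'd) list set). \<Prod>n\<in>{1..N}. 1 + b1 * w n (sum_list (take n xs)))
     = (\<Sum>xs\<in>(paths N :: (int ^ 'd) list set). \<Prod>n\<in>{1..N}. r * (1 + b1 * w n (sum_list (take n xs))))"
    by (simp add: sum_distrib_left prod.distrib)
  also have "\<dots> \<le> (\<Sum>xs\<in>(paths N :: (int ^ 'd) list set). \<Prod>n\<in>{1..N}. 1 + b2 * w n (sum_list (take n xs)))"
    using fac w r0 by (intro sum_mono prod_mono conjI mult_nonneg_nonneg) auto
  finally have le: "r ^ N * (\<Sum>xs\<in>(paths N :: (int ^ 'd) list set). \<Prod>n\<in>{1..N}. 1 + b1 * w n (sum_list (take n xs)))
     \<le> (\<Sum>xs\<in>(paths N :: (int ^ 'd) list set). \<Prod>n\<in>{1..N}. 1 + b2 * w n (sum_list (take n xs)))" .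
  have D0: "(2 * real CARD('d)) ^ N \<ge> 0" by simp
  have "r ^ N * polymer_Z N b1 w = (r ^ N * (\<Sum>xs\<in>(paths N :: (int ^ 'd) list set). \<Prod>n\<in>{1..N}. 1 + b1 * w n (sum_list (take n xs)))) / (2 * real CARD('d)) ^ N"
    unfolding polymer_Z_alt by (simp only: times_divide_eq_right)
  also have "\<dots> \<le> polymer_Z N b2 w"
    unfolding polymer_Z_alt using le D0 by (rule divide_right_mono)
  finally show ?thesis unfolding r_def .
qed

lemma polymer_lower:
  fixes w :: "nat \<Rightarrow> int ^ 'd \<Rightarrow> real"
  assumes w: "\<And>n z. w n z \<ge> -1" and b: "0 \<le> b" "b < 1"
  shows "(1 - b) ^ N / (2 * real CARD('d)) ^ N \<le> polymer_Z N b w"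
proof -
  define D where "D = (2 * real CARD('d)) ^ N"
  have D0: "D > 0" unfolding D_def using d2_pos by simp
  have e: "polymer_Z N 0 w = real (card (paths N :: (int ^ 'd) list set)) / D"
    unfolding polymer_Z_alt D_def
  proof -
    have "(\<Sum>xs\<in>(paths N :: (int ^ 'd) list set). \<Prod>n\<in>{1..N}. 1 + 0 * w n (sum_list (take n xs))) = (\<Sum>xs\<in>(paths N :: (int ^ 'd) list set). 1)"
      by (intro sum.cong refl) (simp only: mult_zero_left add_0_right prod.neutral_const)
    also have "\<dots> = real (card (paths N :: (int ^ 'd) list set))" by (simp only: sum_constant mult_1_right)
    finally show "(\<Sum>xs\<in>(paths N :: (int ^ 'd) list set). \<Prod>n\<in>{1..N}. 1 + 0 * w n (sum_list (take n xs))) / (2 * real CARD('d)) ^ N = real (card (paths N :: (int ^ 'd) list set)) / (2 * real CARD('d)) ^ N" by (simp only:)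
  qed
  have c1: "real (card (paths N :: (int ^ 'd) list set)) \<ge> 1"
  proof -
    have "card (paths N :: (int ^ 'd) list set) > 0"
      by (rule card_gt_0_iff[THEN iffD2], intro conjI paths_ne finite_paths)
    then show ?thesis by linarith
  qed
  have Z0: "1 / D \<le> polymer_Z N 0 w" unfolding e using c1 D0 by (intro divide_right_mono) auto
  have "(1 - b) ^ N * (1 / D) \<le> (1 - b) ^ N * polymer_Z N 0 w"
    using Z0 b by (intro mult_left_mono) auto
  also have "\<dots> \<le> polymer_Z N b w"
    using polymer_ratio[OF w, of 0 b N] b by simp
  finally show ?thesis unfolding D_def by simp
qed

locale PSet =
  fixes M :: "'w measure" and W :: "'w \<Rightarrow> nat \<Rightarrow> int ^ 'd \<Rightarrow> real"
  assumes PMs: "prob_space M"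
    and indep: "prob_space.indep_vars M (\<lambda>_. borel) (\<lambda>(n, z) x. W x n z) UNIV"
    and ident: "\<And>n z. distr M borel (\<lambda>x. W x n z) = distr M borel (\<lambda>x. W x 0 0)"
    and lower: "AE x in M. W x 0 0 \<ge> -1"
    and integ: "integrable M (\<lambda>x. W x 0 0)"
    and mean: "(\<integral>x. W x 0 0 \<partial>M) = 0"
begin

definition mu :: "real measure" where "mu = distr M borel (\<lambda>x. W x 0 0)"

definition Xf :: "nat \<times> (int ^ 'd) \<Rightarrow> 'w \<Rightarrow> real" where "Xf i x = W x (fst i) (snd i)"

lemma Xeq: "(\<lambda>(n, z) x. W x n z) = Xf"
  unfolding Xf_def by (auto simp: fun_eq_iff)

lemma indX: "prob_space.indep_vars M (\<lambda>_. borel) Xf UNIV"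
  using indep unfolding Xeq .

lemma Xm: "Xf i \<in> borel_measurable M"
  using indX PMs unfolding prob_space.indep_vars_def[OF PMs] by (cases i) auto

lemma Wm[measurable]: "(\<lambda>x. W x n z) \<in> borel_measurable M"
  using Xm[of "(n, z)"] unfolding Xf_def by simp

lemma mu_prob: "prob_space mu"
  unfolding mu_def using PMs by (intro prob_space.prob_space_distr) auto

lemma sets_mu: "sets mu = sets borel" unfolding mu_def by simp

lemma int_g: "integrable mu (\<lambda>v. max v (-1))"
proof -
  interpret prob_space M by (rule PMs)
  have "integrable M (\<lambda>x. max (W x 0 0) (-1))" using integ by auto
  then show ?thesis unfolding mu_def by (subst integrable_distr_eq) auto
qed

lemma mean_g: "(\<integral>v. max v (-1) \<partial>mu) = 0"
proof -
  have "(\<integral>v. max v (-1) \<partial>mu) = (\<integral>x. max (W x 0 0) (-1) \<partial>M)"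
    unfolding mu_def by (subst integral_distr) auto
  also have "\<dots> = (\<integral>x. W x 0 0 \<partial>M)"
    using lower by (intro integral_cong_AE) (auto simp: max_def)
  finally show ?thesis using mean by simp
qed

lemma good: "AE x in M. \<forall>n z. -1 \<le> W x n z"
proof -
  have "AE v in mu. -1 \<le> v" unfolding mu_def using lower by (subst AE_distr_iff) auto
  have m: "{v \<in> space borel. -1 \<le> (v::real)} \<in> sets borel" by measurable
  have "AE x in M. -1 \<le> W x n z" for n z
  proof -
    have "AE v in distr M borel (\<lambda>x. W x n z). -1 \<le> v"
      unfolding ident[of n z] using \<open>AE v in mu. -1 \<le> v\<close> unfolding mu_def .
    then show ?thesis using AE_distr_iff[OF Wm m] by simp
  qed
  then show ?thesis by (simp add: AE_all_countable)
qed

lemma pz_inst: "pz mu (Iset N) (paths N) (sites N) (\<lambda>_. 1 / (2 * real CARD('d)) ^ N)"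
proof -
  have a: "\<And>k. k \<in> paths N \<Longrightarrow> sites N k \<subseteq> Iset N" by (rule sites_sub)
  have b: "\<And>k. k \<in> paths N \<Longrightarrow> 0 < 1 / (2 * real CARD('d)) ^ N" using zero_less_power[OF d2_pos, of N] by simp
  show ?thesis by (rule pz.intro[OF mu_prob sets_mu int_g mean_g finite_Iset finite_paths paths_ne a b])
qed

lemma Rm: "(\<lambda>x. \<lambda>i\<in>I. W x (fst i) (snd i)) \<in> measurable M (PiM I (\<lambda>_. borel))"
  by (intro measurable_restrict) simp

lemma distrR:
  assumes I: "I \<noteq> {}"
  shows "distr M (PiM I (\<lambda>_. borel)) (\<lambda>x. \<lambda>i\<in>I. W x (fst i) (snd i)) = PiM I (\<lambda>_. mu)"
proof -
  interpret prob_space M by (rule PMs)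
  have ind: "indep_vars (\<lambda>_. borel) Xf I" using indep_vars_subset[OF indX] by simp
  have "distr M (PiM I (\<lambda>_. borel)) (\<lambda>x. \<lambda>i\<in>I. Xf i x) = PiM I (\<lambda>i. distr M borel (Xf i))"
    using indep_vars_iff_distr_eq_PiM'[OF I, where M'="\<lambda>_. borel" and X=Xf] ind Xm by simp
  also have "\<dots> = PiM I (\<lambda>_. mu)"
    unfolding Xf_def mu_def by (intro PiM_cong refl ident)
  finally show ?thesis unfolding Xf_def .
qed

lemma Zs_borel: "Zs (paths N) (sites N) c s \<in> borel_measurable (PiM (Iset N) (\<lambda>_. borel))"
  by (rule Zs_measurable[OF _ sites_sub]) auto

lemma polyZ_meas: "(\<lambda>x. polymer_Z N \<beta> (W x)) \<in> borel_measurable M"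
  unfolding polymer_Z_def by measurable

abbreviation "cN N \<equiv> (\<lambda>_::(int ^ 'd) list. 1 / (2 * real CARD('d)) ^ N)"
abbreviation "RR N x \<equiv> (\<lambda>i\<in>Iset N. W x (fst i) (snd i))"

lemma aeZ: "AE x in M. polymer_Z N \<beta> (W x) = Zs (paths N) (sites N) (cN N) (\<lambda>_. \<beta>) (RR N x)"
  using good by eventually_elim (rule polymer_Z_Zs, auto)

lemma transfer:
  fixes h :: "(nat \<times> (int ^ 'd) \<Rightarrow> real) \<Rightarrow> real"
  assumes N: "N \<ge> 1" and h: "h \<in> borel_measurable (PiM (Iset N) (\<lambda>_. borel))"
  shows "integrable M (\<lambda>x. h (RR N x)) \<longleftrightarrow> integrable (PiM (Iset N) (\<lambda>_. mu)) h"
    and "(\<integral>x. h (RR N x) \<partial>M) = (\<integral>y. h y \<partial>PiM (Iset N) (\<lambda>_. mu))"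
proof -
  note D = distrR[OF Iset_ne[OF N]]
  show "integrable M (\<lambda>x. h (RR N x)) \<longleftrightarrow> integrable (PiM (Iset N) (\<lambda>_. mu)) h"
    using integrable_distr_eq[OF Rm[of "Iset N"] h] unfolding D by simp
  show "(\<integral>x. h (RR N x) \<partial>M) = (\<integral>y. h y \<partial>PiM (Iset N) (\<lambda>_. mu))"
    using integral_distr[OF Rm[of "Iset N"] h] unfolding D by simp
qed

lemma EZ:
  assumes N: "N \<ge> 1"
  shows "integrable M (\<lambda>x. polymer_Z N \<beta> (W x))" and "(\<integral>x. polymer_Z N \<beta> (W x) \<partial>M) \<le> 1"
proof -
  interpret pz mu "Iset N" "paths N" "sites N" "cN N" by (rule pz_inst)
  have hm: "Zs (paths N) (sites N) (cN N) (\<lambda>_. \<beta>) \<in> borel_measurable (PiM (Iset N) (\<lambda>_. borel))"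
    by (rule Zs_borel)
  have hm': "(\<lambda>x. Zs (paths N) (sites N) (cN N) (\<lambda>_. \<beta>) (RR N x)) \<in> borel_measurable M"
    by (rule measurable_compose[OF Rm[of "Iset N"] hm])
  have i1: "integrable M (\<lambda>x. Zs (paths N) (sites N) (cN N) (\<lambda>_. \<beta>) (RR N x))"
    using transfer(1)[OF N hm] Zs_int(1) by simp
  show "integrable M (\<lambda>x. polymer_Z N \<beta> (W x))"
    using integrable_cong_AE[OF polyZ_meas hm' aeZ[of N \<beta>]] i1 by (simp only:)
  have "(\<integral>x. polymer_Z N \<beta> (W x) \<partial>M) = (\<integral>x. Zs (paths N) (sites N) (cN N) (\<lambda>_. \<beta>) (RR N x) \<partial>M)"
    by (rule integral_cong_AE[OF polyZ_meas hm' aeZ[of N \<beta>]])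
  also have "\<dots> = sum (cN N) (paths N)"
    using transfer(2)[OF N hm] Zs_int(2) by simp
  also have "\<dots> = real (card (paths N :: (int ^ 'd) list set)) * (1 / (2 * real CARD('d)) ^ N)" by (rule sum_constant)
  also have "\<dots> \<le> (2 * real CARD('d)) ^ N * (1 / (2 * real CARD('d)) ^ N)"
    using card_paths[of N] by (rule mult_right_mono) simp
  also have "\<dots> = 1" using d2_pos by simp
  finally show "(\<integral>x. polymer_Z N \<beta> (W x) \<partial>M) \<le> 1" .
qed

lemma ElnZ:
  assumes N: "N \<ge> 1" and b: "0 \<le> \<beta>" "\<beta> < 1"
  shows "integrable M (\<lambda>x. ln (polymer_Z N \<beta> (W x)))"
    and "(\<integral>x. ln (polymer_Z N \<beta> (W x)) \<partial>M) = (\<integral>y. ln (Zs (paths N) (sites N) (cN N) (\<lambda>_. \<beta>) y) \<partial>PiM (Iset N) (\<lambda>_. mu))"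
proof -
  interpret pz mu "Iset N" "paths N" "sites N" "cN N" by (rule pz_inst)
  have hm: "(\<lambda>y. ln (Zs (paths N) (sites N) (cN N) (\<lambda>_. \<beta>) y)) \<in> borel_measurable (PiM (Iset N) (\<lambda>_. borel))"
    using Zs_borel by measurable
  have hm': "(\<lambda>x. ln (Zs (paths N) (sites N) (cN N) (\<lambda>_. \<beta>) (RR N x))) \<in> borel_measurable M"
    by (rule measurable_compose[OF Rm[of "Iset N"] hm])
  have pm: "(\<lambda>x. ln (polymer_Z N \<beta> (W x))) \<in> borel_measurable M" by (intro borel_measurable_ln polyZ_meas)
  have ae: "AE x in M. ln (polymer_Z N \<beta> (W x)) = ln (Zs (paths N) (sites N) (cN N) (\<lambda>_. \<beta>) (RR N x))"
    using aeZ[of N \<beta>] by eventually_elim simp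
  have i1: "integrable M (\<lambda>x. ln (Zs (paths N) (sites N) (cN N) (\<lambda>_. \<beta>) (RR N x)))"
    using transfer(1)[OF N hm] lnZs_int[of "\<lambda>_. \<beta>"] b by simp
  show "integrable M (\<lambda>x. ln (polymer_Z N \<beta> (W x)))"
    using integrable_cong_AE[OF pm hm' ae] i1 by (simp only:)
  have "(\<integral>x. ln (polymer_Z N \<beta> (W x)) \<partial>M) = (\<integral>x. ln (Zs (paths N) (sites N) (cN N) (\<lambda>_. \<beta>) (RR N x)) \<partial>M)"
    by (rule integral_cong_AE[OF pm hm' ae])
  also have "\<dots> = (\<integral>y. ln (Zs (paths N) (sites N) (cN N) (\<lambda>_. \<beta>) y) \<partial>PiM (Iset N) (\<lambda>_. mu))"
    using transfer(2)[OF N hm] by simp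
  finally show "(\<integral>x. ln (polymer_Z N \<beta> (W x)) \<partial>M) = (\<integral>y. ln (Zs (paths N) (sites N) (cN N) (\<lambda>_. \<beta>) y) \<partial>PiM (Iset N) (\<lambda>_. mu))" .
qed

lemma ElnZ_mono:
  assumes N: "N \<ge> 1" and b: "0 \<le> b1" "b1 \<le> b2" "b2 < 1"
  shows "(\<integral>x. ln (polymer_Z N b2 (W x)) \<partial>M) \<le> (\<integral>x. ln (polymer_Z N b1 (W x)) \<partial>M)"
proof -
  interpret pz mu "Iset N" "paths N" "sites N" "cN N" by (rule pz_inst)
  show ?thesis using ElnZ(2)[OF N, of b1] ElnZ(2)[OF N, of b2] mono_all[OF b] b by simp
qed

end

lemma (in prob_space) AE_ex:
  assumes "AE x in M. Q x" shows "\<exists>x. Q x"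
proof (rule ccontr)
  assume "\<not> (\<exists>x. Q x)"
  then have "AE x in M. False" using assms by (auto elim: eventually_mono)
  then show False using AE_False emeasure_space_1 by simp
qed

lemma ptwise:
  fixes Z K :: real and N :: nat
  assumes Z: "Z > 0" and N: "N \<ge> 1" and K: "K \<ge> 0"
  shows "ln Z / real N \<le> min (ln Z / real N) K + exp (- (real N * K)) * Z"
proof (cases "ln Z / real N \<le> K")
  case True
  then show ?thesis using Z by simp
next
  case False
  define y where "y = ln Z / real N - K"
  have y0: "y > 0" using False y_def by simp
  have Nr: "real N \<ge> 1" using N by simp
  have "y \<le> real N * y" using y0 Nr by (simp add: mult_le_cancel_right1)
  also have "\<dots> \<le> exp (real N * y)" using exp_ge_add_one_self[of "real N * y"] by linarith
  also have "real N * y = ln Z - real N * K" unfolding y_def using Nr by (simp add: field_simps)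
  also have "exp (ln Z - real N * K) = exp (- (real N * K)) * Z" using Z by (simp add: exp_diff exp_minus divide_inverse mult.commute)
  finally have "ln Z / real N - K \<le> exp (- (real N * K)) * Z" unfolding y_def .
  then show ?thesis using False by simp
qed

lemma ln_pow_div:
  fixes a D :: real assumes "a > 0" "D > 0"
  shows "ln (a ^ N / D ^ N) = real N * ln a - real N * ln D"
  using assms by (simp add: ln_div ln_realpow)

lemma div_step:
  fixes u a b :: real and N :: nat
  assumes h: "real N * u + a \<le> b" and N: "N \<ge> 1"
  shows "u + a / real N \<le> b / real N"
proof -
  have Np: "real N > 0" using N by simp
  have "(real N * u + a) / real N \<le> b / real N" using h Np by (intro divide_right_mono) auto
  moreover have "(real N * u + a) / real N = u + a / real N" using Np by (simp add: add_divide_distrib)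
  ultimately show ?thesis by simp
qed

context PSet begin

definition LL :: "nat \<Rightarrow> real \<Rightarrow> 'w \<Rightarrow> real" where
  "LL N \<beta> x = ln (polymer_Z N \<beta> (W x)) / real N"

lemma LLm: "(\<lambda>x. LL N \<beta> x) \<in> borel_measurable M"
  unfolding LL_def by (intro borel_measurable_divide borel_measurable_ln polyZ_meas borel_measurable_const)

lemma Zpos:
  assumes w: "\<forall>n z. -1 \<le> W x n z" and b: "0 \<le> \<beta>" "\<beta> < 1"
  shows "polymer_Z N \<beta> (W x) > 0"
proof -
  have "(1 - \<beta>) ^ N / (2 * real CARD('d)) ^ N > 0" using b d2_pos by simp
  also have "\<dots> \<le> polymer_Z N \<beta> (W x)" using w b by (intro polymer_lower) auto
  finally show ?thesis .
qed

lemma LLlb: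
  assumes w: "\<forall>n z. -1 \<le> W x n z" and b: "0 \<le> \<beta>" "\<beta> < 1" and N: "N \<ge> 1"
  shows "ln (1 - \<beta>) - ln (2 * real CARD('d)) \<le> LL N \<beta> x"
proof -
  have d: "2 * real CARD('d) > 0" by (rule d2_pos)
  have pos: "(1 - \<beta>) ^ N / (2 * real CARD('d)) ^ N > 0" using b d by simp
  have le: "(1 - \<beta>) ^ N / (2 * real CARD('d)) ^ N \<le> polymer_Z N \<beta> (W x)" using w b by (intro polymer_lower) auto
  have "ln ((1 - \<beta>) ^ N / (2 * real CARD('d)) ^ N) = real N * ln (1 - \<beta>) - real N * ln (2 * real CARD('d))"
  proof -
    have p1: "(1 - \<beta>) ^ N > 0" using b by simp
    have p2: "(2 * real CARD('d)) ^ N > 0" using d by simp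
    show ?thesis using ln_pow_div[OF _ d, of "1 - \<beta>" N] b by simp
  qed
  moreover have "ln ((1 - \<beta>) ^ N / (2 * real CARD('d)) ^ N) \<le> ln (polymer_Z N \<beta> (W x))"
    using pos le by simp
  ultimately have "real N * (ln (1 - \<beta>) - ln (2 * real CARD('d))) \<le> ln (polymer_Z N \<beta> (W x))"
    by (simp add: algebra_simps)
  then show ?thesis unfolding LL_def using N by (simp add: field_simps)
qed

lemma LLratio:
  assumes w: "\<forall>n z. -1 \<le> W x n z" and b: "0 \<le> b1" "b1 \<le> b2" "b2 < 1" and N: "N \<ge> 1"
  shows "ln ((1 - b2) / (1 - b1)) + LL N b1 x \<le> LL N b2 x"
proof -
  define r where "r = (1 - b2) / (1 - b1)"
  have r: "r > 0" unfolding r_def using b by simp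
  have Z1: "polymer_Z N b1 (W x) > 0" using Zpos[OF w] b by simp
  have le: "r ^ N * polymer_Z N b1 (W x) \<le> polymer_Z N b2 (W x)"
    unfolding r_def using w b by (intro polymer_ratio) auto
  have "real N * ln r + ln (polymer_Z N b1 (W x)) = ln (r ^ N * polymer_Z N b1 (W x))"
    using r Z1 by (simp add: ln_mult ln_realpow)
  also have "\<dots> \<le> ln (polymer_Z N b2 (W x))"
  proof -
    have pos: "0 < r ^ N * polymer_Z N b1 (W x)" using r Z1 by simp
    have pos2: "0 < polymer_Z N b2 (W x)" by (rule order.strict_trans2[OF pos le])
    show ?thesis using ln_le_cancel_iff[OF pos pos2] le by simp
  qed
  finally have "real N * ln r + ln (polymer_Z N b1 (W x)) \<le> ln (polymer_Z N b2 (W x))" .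
  then show ?thesis unfolding LL_def r_def[symmetric] using N by (rule div_step)
qed

end

context PSet begin

lemma dom_conv:
  assumes b: "0 \<le> \<beta>" "\<beta> < 1"
    and conv: "AE x in M. (\<lambda>N. LL N \<beta> x) \<longlonglongrightarrow> q"
  shows "(\<lambda>N. \<integral>x. min (LL N \<beta> x) K \<partial>M) \<longlonglongrightarrow> min q K"
proof -
  interpret P: prob_space M by (rule PMs)
  define lb where "lb = ln (1 - \<beta>) - ln (2 * real CARD('d))"
  have "(\<lambda>N. \<integral>x. min (LL N \<beta> x) K \<partial>M) \<longlonglongrightarrow> (\<integral>x. min q K \<partial>M)"
  proof (rule integral_dominated_convergence[where w="\<lambda>x. \<bar>lb\<bar> + \<bar>K\<bar>"])
    show "(\<lambda>x. min q K) \<in> borel_measurable M" by simp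
    show "(\<lambda>x. min (LL N \<beta> x) K) \<in> borel_measurable M" for N
      by (intro borel_measurable_min LLm borel_measurable_const)
    show "integrable M (\<lambda>x. \<bar>lb\<bar> + \<bar>K\<bar>)" by simp
    show "AE x in M. (\<lambda>N. min (LL N \<beta> x) K) \<longlonglongrightarrow> min q K"
      using conv by eventually_elim (intro tendsto_min tendsto_const)
    show "AE x in M. norm (min (LL N \<beta> x) K) \<le> \<bar>lb\<bar> + \<bar>K\<bar>" for N
      using good
    proof eventually_elim
      case (elim x)
      show ?case
      proof (cases "N = 0")
        case True then show ?thesis by (simp add: LL_def)
      next
        case False
        then have "lb \<le> LL N \<beta> x" unfolding lb_def using LLlb[OF elim b] by simp
        then show ?thesis by (simp add: abs_if min_def)
      qed
    qed
  qed
  then show ?thesis by (simp add: P.prob_space)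
qed

lemma LL_int:
  assumes N: "N \<ge> 1" and b: "0 \<le> \<beta>" "\<beta> < 1"
  shows "integrable M (LL N \<beta>)"
  unfolding LL_def[abs_def] using ElnZ(1)[OF N b] by simp

lemma LL_E:
  assumes N: "N \<ge> 1" and b: "0 \<le> \<beta>" "\<beta> < 1"
  shows "(\<integral>x. LL N \<beta> x \<partial>M) = (\<integral>x. ln (polymer_Z N \<beta> (W x)) \<partial>M) / real N"
  unfolding LL_def by simp

lemma fin_ineq:
  assumes N: "N \<ge> 1" and b: "0 \<le> a" "a \<le> b" "b < 1" and K: "K \<ge> 0"
  shows "(\<integral>x. min (LL N b x) K \<partial>M) \<le> (\<integral>x. min (LL N a x) K \<partial>M) + exp (- K)"
proof -
  interpret P: prob_space M by (rule PMs)
  have a1: "0 \<le> a" "a < 1" and b1: "0 \<le> b" "b < 1" using b by auto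
  have iLa: "integrable M (LL N a)" by (rule LL_int[OF N a1])
  have iLb: "integrable M (LL N b)" by (rule LL_int[OF N b1])
  have iMa: "integrable M (\<lambda>x. min (LL N a x) K)" using iLa by auto
  have iMb: "integrable M (\<lambda>x. min (LL N b x) K)" using iLb by auto
  have iZ: "integrable M (\<lambda>x. polymer_Z N a (W x))" by (rule EZ(1)[OF N])
  have EZ1: "(\<integral>x. polymer_Z N a (W x) \<partial>M) \<le> 1" by (rule EZ(2)[OF N])
  have "(\<integral>x. min (LL N b x) K \<partial>M) \<le> (\<integral>x. LL N b x \<partial>M)"
    using iMb iLb by (intro integral_mono) auto
  also have "\<dots> \<le> (\<integral>x. LL N a x \<partial>M)"
    unfolding LL_E[OF N a1] LL_E[OF N b1] using ElnZ_mono[OF N b] by (intro divide_right_mono) auto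
  also have "\<dots> \<le> (\<integral>x. min (LL N a x) K + exp (- (real N * K)) * polymer_Z N a (W x) \<partial>M)"
  proof (rule integral_mono_AE)
    show "integrable M (LL N a)" by (rule iLa)
    show "integrable M (\<lambda>x. min (LL N a x) K + exp (- (real N * K)) * polymer_Z N a (W x))"
      using iMa iZ by auto
    show "AE x in M. LL N a x \<le> min (LL N a x) K + exp (- (real N * K)) * polymer_Z N a (W x)"
      using good
    proof eventually_elim
      case (elim x)
      have "polymer_Z N a (W x) > 0" by (rule Zpos[OF elim a1])
      then show ?case unfolding LL_def using ptwise N K by blast
    qed
  qed
  also have "\<dots> = (\<integral>x. min (LL N a x) K \<partial>M) + exp (- (real N * K)) * (\<integral>x. polymer_Z N a (W x) \<partial>M)"
    using iMa iZ by simp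
  also have "\<dots> \<le> (\<integral>x. min (LL N a x) K \<partial>M) + exp (- (real N * K)) * 1"
    using EZ1 by (intro add_left_mono mult_left_mono) auto
  also have "\<dots> \<le> (\<integral>x. min (LL N a x) K \<partial>M) + exp (- K)"
  proof -
    have "K \<le> real N * K" using N K by (simp add: mult_le_cancel_right1)
    then show ?thesis by simp
  qed
  finally show ?thesis .
qed

lemma main_mono:
  assumes b: "0 \<le> a" "a \<le> b" "b < 1"
    and ca: "AE x in M. (\<lambda>N. LL N a x) \<longlonglongrightarrow> pa"
    and cb: "AE x in M. (\<lambda>N. LL N b x) \<longlonglongrightarrow> pb"
  shows "pb \<le> pa"
proof (rule ccontr)
  assume "\<not> pb \<le> pa"
  then have lt: "pa < pb" by simp
  define \<delta> where "\<delta> = pb - pa"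
  have d0: "\<delta> > 0" using lt \<delta>_def by simp
  define K where "K = \<bar>pa\<bar> + \<bar>pb\<bar> + \<bar>ln (\<delta> / 2)\<bar>"
  have K0: "K \<ge> 0" unfolding K_def by simp
  have Ka: "pa \<le> K" "pb \<le> K" unfolding K_def by auto
  have eK: "exp (- K) \<le> \<delta> / 2"
  proof -
    have "- K \<le> ln (\<delta> / 2)" unfolding K_def by linarith
    then have "exp (- K) \<le> exp (ln (\<delta> / 2))" by simp
    then show ?thesis using d0 by simp
  qed
  have a1: "0 \<le> a" "a < 1" and b1: "0 \<le> b" "b < 1" using b by auto
  have la: "(\<lambda>N. (\<integral>x. min (LL N a x) K \<partial>M) + exp (- K)) \<longlonglongrightarrow> min pa K + exp (- K)"
    by (intro tendsto_add dom_conv[OF a1 ca] tendsto_const)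
  have lb: "(\<lambda>N. \<integral>x. min (LL N b x) K \<partial>M) \<longlonglongrightarrow> min pb K"
    by (rule dom_conv[OF b1 cb])
  have "min pb K \<le> min pa K + exp (- K)"
  proof (rule LIMSEQ_le[OF lb la])
    show "\<exists>N0. \<forall>N\<ge>N0. (\<integral>x. min (LL N b x) K \<partial>M) \<le> (\<integral>x. min (LL N a x) K \<partial>M) + exp (- K)"
      using fin_ineq[OF _ b K0] by (intro exI[of _ 1]) auto
  qed
  then have "pb \<le> pa + exp (- K)" using Ka by simp
  then show False using eK d0 \<delta>_def by linarith
qed

lemma main_ratio:
  assumes b: "0 \<le> a" "a \<le> b" "b < 1"
    and ca: "AE x in M. (\<lambda>N. LL N a x) \<longlonglongrightarrow> pa"
    and cb: "AE x in M. (\<lambda>N. LL N b x) \<longlonglongrightarrow> pb"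
  shows "ln ((1 - b) / (1 - a)) + pa \<le> pb"
proof -
  interpret P: prob_space M by (rule PMs)
  have "AE x in M. (\<forall>n z. -1 \<le> W x n z) \<and> (\<lambda>N. LL N a x) \<longlonglongrightarrow> pa \<and> (\<lambda>N. LL N b x) \<longlonglongrightarrow> pb"
    using good ca cb by eventually_elim auto
  then obtain x where x: "\<forall>n z. -1 \<le> W x n z" "(\<lambda>N. LL N a x) \<longlonglongrightarrow> pa" "(\<lambda>N. LL N b x) \<longlonglongrightarrow> pb"
    using P.AE_ex by blast
  show ?thesis
  proof (rule LIMSEQ_le[OF tendsto_add[OF tendsto_const x(2)] x(3)])
    show "\<exists>N0. \<forall>N\<ge>N0. ln ((1 - b) / (1 - a)) + LL N a x \<le> LL N b x"
      using LLratio[OF x(1) b] by (intro exI[of _ 1]) auto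
  qed
qed

end

theorem theoremA1:
  fixes M :: "'w measure"
    and W :: "'w \<Rightarrow> nat \<Rightarrow> int ^ 'd \<Rightarrow> real"
    and C \<gamma> :: real
    and p :: "real \<Rightarrow> real"
  assumes "prob_space M"
    and indep: "prob_space.indep_vars M (\<lambda>_. borel) (\<lambda>(n, z) x. W x n z) UNIV"
    and ident: "\<And>n z. distr M borel (\<lambda>x. W x n z) = distr M borel (\<lambda>x. W x 0 0)"
    and lower: "AE x in M. W x 0 0 \<ge> -1"
    and integ: "integrable M (\<lambda>x. W x 0 0)"
    and mean: "(\<integral>x. W x 0 0 \<partial>M) = 0"
    and C_pos: "C > 0"
    and gamma: "1 < \<gamma>" "\<gamma> < 2"
    and tail: "(\<lambda>t. measure M {x \<in> space M. W x 0 0 > t}) \<sim>[at_top] (\<lambda>t. C * t powr (-\<gamma>))"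
    and free_energy: "\<And>\<beta>. 0 \<le> \<beta> \<Longrightarrow> \<beta> < 1 \<Longrightarrow>
        AE x in M. (\<lambda>N. ln (polymer_Z N \<beta> (W x)) / real N) \<longlonglongrightarrow> p \<beta>"
  shows "continuous_on {0..<1} p \<and>
         (\<forall>a b. 0 \<le> a \<and> a \<le> b \<and> b < 1 \<longrightarrow> p b \<le> p a)"
proof -
  interpret PSet M W by (rule PSet.intro[OF assms(1) indep ident lower integ mean])
  have conv: "AE x in M. (\<lambda>N. LL N \<beta> x) \<longlonglongrightarrow> p \<beta>" if "0 \<le> \<beta>" "\<beta> < 1" for \<beta>
    unfolding LL_def using that by (rule free_energy)
  have mono: "p b \<le> p a" if ab: "0 \<le> a" "a \<le> b" "b < 1" for a b
    using ab by (rule main_mono) (rule conv; use ab in auto)+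
  have ratio: "ln ((1 - b) / (1 - a)) + p a \<le> p b" if ab: "0 \<le> a" "a \<le> b" "b < 1" for a b
    using ab by (rule main_ratio) (rule conv; use ab in auto)+
  have half: "\<bar>p y - p x\<bar> \<le> \<bar>ln (1 - y) - ln (1 - x)\<bar>" if xy: "0 \<le> x" "x \<le> y" "y < 1" for x y
  proof -
    have "ln ((1 - y) / (1 - x)) = ln (1 - y) - ln (1 - x)" using xy by (simp add: ln_div)
    then have "ln (1 - y) - ln (1 - x) + p x \<le> p y" using ratio[OF xy] by simp
    moreover have "p y \<le> p x" by (rule mono[OF xy])
    ultimately show ?thesis by linarith
  qed
  have bound: "\<bar>p y - p x\<bar> \<le> \<bar>ln (1 - y) - ln (1 - x)\<bar>" if "x \<in> {0..<1}" "y \<in> {0..<1}" for x y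
  proof (cases "x \<le> y")
    case True then show ?thesis using half that by auto
  next
    case False
    then have "\<bar>p x - p y\<bar> \<le> \<bar>ln (1 - x) - ln (1 - y)\<bar>" using half that by auto
    then show ?thesis by linarith
  qed
  have cont: "continuous_on {0..<1} p"
    unfolding continuous_on_def
  proof (intro ballI)
    fix x :: real assume x: "x \<in> {0..<1}"
    have "((\<lambda>y. ln (1 - y)) \<longlongrightarrow> ln (1 - x)) (at x within {0..<1})"
      using x by (intro tendsto_intros) auto
    then have "((\<lambda>y. ln (1 - y) - ln (1 - x)) \<longlongrightarrow> ln (1 - x) - ln (1 - x)) (at x within {0..<1})"
      by (intro tendsto_diff tendsto_const)
    then have "((\<lambda>y. \<bar>ln (1 - y) - ln (1 - x)\<bar>) \<longlongrightarrow> \<bar>ln (1 - x) - ln (1 - x)\<bar>) (at x within {0..<1})"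
      by (rule tendsto_rabs)
    then have g: "((\<lambda>y. \<bar>ln (1 - y) - ln (1 - x)\<bar>) \<longlongrightarrow> 0) (at x within {0..<1})" by simp
    have ev: "eventually (\<lambda>y. norm (p y - p x) \<le> \<bar>ln (1 - y) - ln (1 - x)\<bar>) (at x within {0..<1})"
      unfolding eventually_at_filter using bound x by (intro always_eventually) auto
    have "((\<lambda>y. p y - p x) \<longlongrightarrow> 0) (at x within {0..<1})" by (rule Lim_null_comparison[OF ev g])
    then show "(p \<longlongrightarrow> p x) (at x within {0..<1})" unfolding Lim_null[of p "p x"] .
  qed
  show ?thesis using cont mono by blast
qed

end
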